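(* Consider the problem $\min_{x\in\mathbb{R}^p} F(x):=f(x)+g(x)$, where: (i) $f:\mathbb{R}^p\to\mathbb{R}$ is $L$-smooth ($\|\nabla f(x)-\nabla f(y)\|\le L\|x-y\|$ for all $x,y$) and $g:\mathbb{R}^p\to\mathbb{R}\cup\{\infty\}$ is proper, lower semicontinuous and directionally differentiable; (ii) $F$ is bounded below; (iii) $g$ is prox-bounded, i.e. $g+\frac{\eta}{2}\|\cdot\|^2$ is bounded below for some $\eta>0$. Let $\{(x_t,\eta_t):t\ge0\}$ be generated by the following algorithm (GIST), run indefinitely: fix $\rho>1$, $0<\underline\eta<\overline\eta$, $\sigma\in(0,1)$ and an integer $r\ge1$, and start from $x_0\in\operatorname{dom}F$. At iteration $t$, choose $\hat\eta_t\in[\underline\eta,\overline\eta]$; for $l=0,1,2,\dots$ set $\eta_t=\rho^l\hat\eta_t$ and compute $x_{t+1}\in\operatorname{Prox}_{g/\eta_t}\big(x_t-\frac1{\eta_t}\nabla f(x_t)\big)$, stopping at the first $l$ for which $$F(x_{t+1})\le \max\{F(x_{t-r+1}),\dots,F(x_t)\}-\frac{\sigma\eta_t}{2}\|x_{t+1}-x_t\|^2$$ (where only indices $\ge 0$ are used in the maximum). If the generated sequence $\{x_t\}$ is bounded and $F$ is continuous on a compact set containing the sequence, then any accumulation point of $\{x_t\}$ is a d-stationary point of $F$.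
   Context: $\|\cdot\|$ is the Euclidean norm. $\operatorname{Prox}_{g/\eta}(y):=\operatorname{argmin}_{x\in\mathbb{R}^p}\{\tfrac1\eta g(x)+\tfrac12\|x-y\|^2\}$. The directional derivative is $F'(x;d):=\lim_{\tau\to+0}\frac{F(x+\tau d)-F(x)}{\tau}$ (possibly $+\infty$). A point $x^*$ is a d(irectional)-stationary point of $F$ if $F$ is directionally differentiable at $x^*$ (i.e. $F'(x^*;d)$ exists for all $d$) and $F'(x^*;d)\ge0$ for all $d\in\mathbb{R}^p$. *)

theory Defs
  imports "HOL-Analysis.Analysis"
begin

text \<open>Extended-real valued functions on a Euclidean space; \<infinity> encodes "outside the domain".\<close>

definition edom :: "('a \<Rightarrow> ereal) \<Rightarrow> 'a set" where
  "edom g = {x. g x < \<infinity>}"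

definition proper_fun :: "('a \<Rightarrow> ereal) \<Rightarrow> bool" where
  "proper_fun g \<longleftrightarrow> (\<forall>x. g x \<noteq> -\<infinity>) \<and> (\<exists>x. g x < \<infinity>)"

definition lsc_fun :: "('a::topological_space \<Rightarrow> ereal) \<Rightarrow> bool" where
  "lsc_fun g \<longleftrightarrow> (\<forall>c::ereal. closed {x. g x \<le> c})"

definition has_dir_deriv :: "('a::real_normed_vector \<Rightarrow> ereal) \<Rightarrow> 'a \<Rightarrow> 'a \<Rightarrow> ereal \<Rightarrow> bool" where
  "has_dir_deriv F x d D \<longleftrightarrow>
     ((\<lambda>\<tau>::real. (F (x + \<tau> *\<^sub>R d) - F x) / ereal \<tau>) \<longlongrightarrow> D) (at_right 0)"

definition dir_deriv :: "('a::real_normed_vector \<Rightarrow> ereal) \<Rightarrow> 'a \<Rightarrow> 'a \<Rightarrow> ereal" where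
  "dir_deriv F x d = Lim (at_right 0) (\<lambda>\<tau>::real. (F (x + \<tau> *\<^sub>R d) - F x) / ereal \<tau>)"

definition dir_differentiable_at :: "('a::real_normed_vector \<Rightarrow> ereal) \<Rightarrow> 'a \<Rightarrow> bool" where
  "dir_differentiable_at F x \<longleftrightarrow> \<bar>F x\<bar> < \<infinity> \<and> (\<forall>d. \<exists>D. has_dir_deriv F x d D)"

definition d_stationary :: "('a::real_normed_vector \<Rightarrow> ereal) \<Rightarrow> 'a \<Rightarrow> bool" where
  "d_stationary F x \<longleftrightarrow> dir_differentiable_at F x \<and> (\<forall>d. dir_deriv F x d \<ge> 0)"

definition prox :: "('a::real_normed_vector \<Rightarrow> ereal) \<Rightarrow> real \<Rightarrow> 'a \<Rightarrow> 'a set" where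
  "prox g \<eta> y = {x. \<forall>z. g x / ereal \<eta> + ereal (norm (x - y)^2 / 2)
                        \<le> g z / ereal \<eta> + ereal (norm (z - y)^2 / 2)}"

definition prox_bounded :: "('a::real_normed_vector \<Rightarrow> ereal) \<Rightarrow> bool" where
  "prox_bounded g \<longleftrightarrow> (\<exists>\<eta>>0. \<exists>c::real. \<forall>x. g x + ereal (\<eta> / 2 * norm x ^ 2) \<ge> ereal c)"

end

theory Submission
  imports Defs "HOL-Analysis.Analysis"
begin


lemma nonmono_steps:
  fixes \<phi> :: "nat \<Rightarrow> real" and x :: "nat \<Rightarrow> 'a::metric_space"
  assumes r: "r \<ge> 1" and c: "c > 0"
    and dec: "\<And>t. \<phi> (Suc t) \<le> Max (\<phi> ` {Suc t - r..t}) - c * (dist (x (Suc t)) (x t))\<^sup>2"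
    and lb: "\<And>t. \<phi> t \<ge> b"
    and uc: "\<And>e. e > 0 \<Longrightarrow> \<exists>d>0. \<forall>s t. dist (x s) (x t) < d \<longrightarrow> \<bar>\<phi> s - \<phi> t\<bar> < e"
  shows "(\<lambda>t. dist (x (Suc t)) (x t)) \<longlonglongrightarrow> 0"
proof -
  define M where "M t = Max (\<phi> ` {Suc t - r..t})" for t
  have fin: "finite (\<phi> ` {Suc t - r..t})" "\<phi> ` {Suc t - r..t} \<noteq> {}" for t using r by auto
  have phiM: "\<phi> t \<le> M t" for t unfolding M_def by (rule Max_ge) (use r in auto)
  have phiS: "\<phi> (Suc t) \<le> M t" for t
    using dec[of t] c unfolding M_def[symmetric] by (smt (verit) mult_nonneg_nonneg zero_le_power2)
  have Mdec: "M (Suc t) \<le> M t" for t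
  proof -
    have "\<forall>j\<in>{Suc (Suc t) - r..Suc t}. \<phi> j \<le> M t"
    proof
      fix j assume j: "j \<in> {Suc (Suc t) - r..Suc t}"
      show "\<phi> j \<le> M t"
      proof (cases "j = Suc t")
        case True then show ?thesis using phiS by simp
      next
        case False
        then have "j \<in> {Suc t - r..t}" using j by auto
        then show ?thesis unfolding M_def by (intro Max_ge) auto
      qed
    qed
    then show ?thesis unfolding M_def using r by (subst Max_le_iff) auto
  qed
  have "decseq M" by (rule decseq_SucI) (use Mdec in auto)
  moreover have "\<forall>i. b \<le> M i" using lb phiM by (meson order_trans)
  ultimately obtain Ms where Mlim: "M \<longlonglongrightarrow> Ms" and Mge: "\<forall>i. Ms \<le> M i"
    using decseq_convergent by blast
  have R: "\<forall>e>0. \<exists>T. \<forall>s\<ge>T. \<phi> s \<ge> Ms \<longrightarrow> (\<forall>j\<le>n. dist (x s) (x (s - j)) < e)" for n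
  proof (induction n)
    case 0
    then show ?case by auto
  next
    case (Suc n)
    show ?case
    proof (intro allI impI)
      fix e :: real assume e: "e > 0"
      define e1 where "e1 = c * e\<^sup>2 / 16"
      have e1: "e1 > 0" using c e unfolding e1_def by simp
      obtain d where d: "d > 0" "\<forall>s t. dist (x s) (x t) < d \<longrightarrow> \<bar>\<phi> s - \<phi> t\<bar> < e1"
        using uc[OF e1] by blast
      obtain T0 where T0: "\<forall>s\<ge>T0. \<phi> s \<ge> Ms \<longrightarrow> (\<forall>j\<le>n. dist (x s) (x (s - j)) < min d (e/2))"
        using Suc.IH d e by (metis half_gt_zero min_less_iff_conj)
      obtain T1 where T1: "\<forall>t\<ge>T1. dist (M t) Ms < e1"
        using Mlim e1 by (metis LIMSEQ_iff_nz dist_real_def)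
      show "\<exists>T. \<forall>s\<ge>T. \<phi> s \<ge> Ms \<longrightarrow> (\<forall>j\<le>Suc n. dist (x s) (x (s - j)) < e)"
      proof (intro exI allI impI)
        fix s j assume s: "T0 + T1 + n + 1 \<le> s" and ps: "\<phi> s \<ge> Ms" and j: "j \<le> Suc n"
        show "dist (x s) (x (s - j)) < e"
        proof (cases "j \<le> n")
          case True
          have "dist (x s) (x (s - j)) < min d (e/2)" using T0 s ps True by auto
          then show ?thesis using e by linarith
        next
          case False
          then have jn: "j = Suc n" using j by simp
          define s' where "s' = s - n"
          have s's: "s' = Suc (s - Suc n)" using s unfolding s'_def by simp
          have d1: "dist (x s) (x s') < min d (e/2)" using T0 s ps unfolding s'_def by auto
          then have "\<bar>\<phi> s - \<phi> s'\<bar> < e1" using d by auto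
          then have p1: "\<phi> s' > Ms - e1" using ps by linarith
          have "dist (M (s - Suc n)) Ms < e1" using T1 s by auto
          then have p2: "M (s - Suc n) < Ms + e1" by (simp add: dist_real_def)
          define D where "D = dist (x s') (x (s - Suc n))"
          have "\<phi> s' \<le> M (s - Suc n) - c * D\<^sup>2"
            using dec[of "s - Suc n"] unfolding M_def[symmetric] D_def s's by simp
          then have "c * D\<^sup>2 < 2 * e1" using p1 p2 by linarith
          then have "c * D\<^sup>2 < c * e\<^sup>2 / 8" unfolding e1_def by simp
          moreover have "c * e\<^sup>2 / 8 \<le> c * (e/2)\<^sup>2" using c by (simp add: power2_eq_square)
          ultimately have "c * D\<^sup>2 < c * (e/2)\<^sup>2" by linarith
          then have "D\<^sup>2 < (e/2)\<^sup>2" using c by simp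
          then have "D < e/2" using e by (meson power_less_imp_less_base less_le half_gt_zero)
          moreover have "dist (x s) (x (s - Suc n)) \<le> dist (x s) (x s') + D"
            unfolding D_def by (rule dist_triangle)
          moreover have "dist (x s) (x s') < e/2" using d1 by simp
          ultimately show ?thesis unfolding jn by linarith
        qed
      qed
    qed
  qed
  show ?thesis
  proof (rule metric_LIMSEQ_I)
    fix e :: real assume e: "e > 0"
    obtain T where T: "\<forall>s\<ge>T. \<phi> s \<ge> Ms \<longrightarrow> (\<forall>j\<le>r. dist (x s) (x (s - j)) < e/2)"
      using R[of r] e by (meson half_gt_zero)
    show "\<exists>no. \<forall>n\<ge>no. dist (dist (x (Suc n)) (x n)) 0 < e"
    proof (intro exI allI impI)
      fix t assume t: "T \<le> t"
      have "M (t + r) \<in> \<phi> ` {Suc (t + r) - r..t + r}" unfolding M_def by (rule Max_in) (use r in auto)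
      then obtain s where s: "s \<in> {Suc t..t + r}" "\<phi> s = M (t + r)" by auto
      then have ps: "\<phi> s \<ge> Ms" using Mge by simp
      have "s \<ge> T" using s t by auto
      then have Tps: "\<forall>j\<le>r. dist (x s) (x (s - j)) < e/2" using T ps by blast
      have "s - t \<le> r" "s - Suc t \<le> r" using s by auto
      then have a1: "dist (x s) (x (s - (s - t))) < e/2" and a2: "dist (x s) (x (s - (s - Suc t))) < e/2"
        using Tps by auto
      have "s - (s - t) = t" "s - (s - Suc t) = Suc t" using s by auto
      then have b1: "dist (x s) (x t) < e/2" and b2: "dist (x s) (x (Suc t)) < e/2" using a1 a2 by simp_all
      have "dist (x (Suc t)) (x t) \<le> dist (x s) (x (Suc t)) + dist (x s) (x t)"
        by (rule dist_triangle3)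
      then have "dist (x (Suc t)) (x t) < e" using b1 b2 by linarith
      then show "dist (dist (x (Suc t)) (x t)) 0 < e" by simp
    qed
  qed
qed



lemma descent:
  fixes f :: "'a::euclidean_space \<Rightarrow> real"
  assumes grad: "\<And>u. (f has_derivative (\<lambda>h. gradf u \<bullet> h)) (at u)"
    and Ls: "\<And>u v. norm (gradf u - gradf v) \<le> L * norm (u - v)" and L: "L \<ge> 0"
  shows "f z \<le> f y + gradf y \<bullet> (z - y) + L * (norm (z - y))\<^sup>2"
proof -
  define d where "d = z - y"
  define \<psi> where "\<psi> s = f (y + s *\<^sub>R d)" for s
  have der: "(\<psi> has_real_derivative (gradf (y + s *\<^sub>R d) \<bullet> d)) (at s)" for s
  proof -
    have l: "((\<lambda>s. y + s *\<^sub>R d) has_derivative (\<lambda>h. h *\<^sub>R d)) (at s)"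
      by (auto intro!: derivative_eq_intros)
    have "((\<lambda>s. f (y + s *\<^sub>R d)) has_derivative (\<lambda>h. gradf (y + s *\<^sub>R d) \<bullet> (h *\<^sub>R d))) (at s)"
      using has_derivative_compose[OF l grad] by (simp add: o_def)
    moreover have "(\<lambda>h. gradf (y + s *\<^sub>R d) \<bullet> (h *\<^sub>R d)) = (*) (gradf (y + s *\<^sub>R d) \<bullet> d)"
      by (auto simp: mult.commute)
    ultimately show ?thesis unfolding has_field_derivative_def \<psi>_def by simp
  qed
  obtain \<xi> where \<xi>: "0 < \<xi>" "\<xi> < 1" "\<psi> 1 - \<psi> 0 = (1 - 0) * (gradf (y + \<xi> *\<^sub>R d) \<bullet> d)"
    using MVT2[of 0 1 \<psi> "\<lambda>s. gradf (y + s *\<^sub>R d) \<bullet> d"] der by auto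
  have "(gradf (y + \<xi> *\<^sub>R d) - gradf y) \<bullet> d \<le> norm (gradf (y + \<xi> *\<^sub>R d) - gradf y) * norm d"
    by (rule norm_cauchy_schwarz)
  also have "\<dots> \<le> (L * norm (\<xi> *\<^sub>R d)) * norm d"
    using Ls[of "y + \<xi> *\<^sub>R d" y] by (intro mult_right_mono) auto
  also have "\<dots> = L * \<xi> * (norm d)\<^sup>2" using \<xi> by (simp add: power2_eq_square)
  also have "\<dots> \<le> L * (norm d)\<^sup>2" using mult_left_le_one_le[of "L * (norm d)\<^sup>2" \<xi>] \<xi> L by (simp add: mult_ac)
  finally have "(gradf (y + \<xi> *\<^sub>R d) - gradf y) \<bullet> d \<le> L * (norm d)\<^sup>2" .
  then show ?thesis using \<xi> unfolding \<psi>_def d_def by (simp add: inner_diff_left algebra_simps)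
qed

lemma prox_real_alg:
  fixes p q v :: "'a::real_inner"
  assumes \<eta>: "\<eta> > 0"
    and h: "a / \<eta> + (norm (p + (1/\<eta>) *\<^sub>R v))\<^sup>2 / 2 \<le> b / \<eta> + (norm (q + (1/\<eta>) *\<^sub>R v))\<^sup>2 / 2"
  shows "a + v \<bullet> p + \<eta>/2 * (norm p)\<^sup>2 \<le> b + v \<bullet> q + \<eta>/2 * (norm q)\<^sup>2"
proof -
  have e: "(norm (w + (1/\<eta>) *\<^sub>R v))\<^sup>2 = (norm w)\<^sup>2 + 2/\<eta> * (v \<bullet> w) + (norm v)\<^sup>2/\<eta>^2" for w :: 'a
    by (simp only: power2_norm_eq_inner) (simp add: inner_add_left inner_add_right inner_commute power2_eq_square field_simps)
  have "a / \<eta> + ((norm p)\<^sup>2/2 + (v \<bullet> p)/\<eta>) \<le> b / \<eta> + ((norm q)\<^sup>2/2 + (v \<bullet> q)/\<eta>)"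
    using h unfolding e by (simp add: field_simps)
  then have "\<eta> * (a / \<eta> + ((norm p)\<^sup>2/2 + (v \<bullet> p)/\<eta>)) \<le> \<eta> * (b / \<eta> + ((norm q)\<^sup>2/2 + (v \<bullet> q)/\<eta>))"
    using \<eta> by (intro mult_left_mono) auto
  moreover have "\<eta> * (c / \<eta> + (X/2 + Y/\<eta>)) = c + Y + \<eta>/2 * X" for c X Y
    using \<eta> by (simp add: field_simps)
  ultimately show ?thesis by simp
qed

lemma prox_ineq:
  fixes g :: "'a::real_inner \<Rightarrow> ereal"
  assumes z: "z \<in> prox g \<eta> (y - (1/\<eta>) *\<^sub>R v)" and \<eta>: "\<eta> > 0"
    and gu: "g u \<noteq> \<infinity>" and ninf: "\<And>w. g w \<noteq> -\<infinity>"
  shows "g z \<noteq> \<infinity> \<and> real_of_ereal (g z) + v \<bullet> (z - y) + \<eta>/2 * (norm (z - y))\<^sup>2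
           \<le> real_of_ereal (g u) + v \<bullet> (u - y) + \<eta>/2 * (norm (u - y))\<^sup>2"
proof -
  have P: "g z / ereal \<eta> + ereal ((norm (z - (y - (1/\<eta>) *\<^sub>R v)))\<^sup>2 / 2)
        \<le> g u / ereal \<eta> + ereal ((norm (u - (y - (1/\<eta>) *\<^sub>R v)))\<^sup>2 / 2)"
    using z unfolding prox_def by blast
  obtain b where b: "g u = ereal b" using gu ninf[of u] by (cases "g u") auto
  have gz: "g z \<noteq> \<infinity>"
  proof
    assume "g z = \<infinity>"
    then show False using P b \<eta> by simp
  qed
  obtain a where a: "g z = ereal a" using gz ninf[of z] by (cases "g z") auto
  have "a / \<eta> + (norm ((z - y) + (1/\<eta>) *\<^sub>R v))\<^sup>2 / 2 \<le> b / \<eta> + (norm ((u - y) + (1/\<eta>) *\<^sub>R v))\<^sup>2 / 2"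
    using P a b \<eta> by (simp add: algebra_simps)
  from prox_real_alg[OF \<eta> this] show ?thesis using a b gz by simp
qed


lemma quot_split:
  assumes "\<tau> > 0" "g0 = ereal c" "g1 \<noteq> -\<infinity>"
  shows "(ereal a + g1 - (ereal b + g0)) / ereal \<tau> = ereal ((a - b)/\<tau>) + (g1 - g0)/ereal \<tau>"
  using assms by (cases g1) (auto simp: diff_divide_distrib add_divide_distrib)

lemma ereal_minus_nonneg_le: "(m::ereal) - ereal a \<le> m" if "a \<ge> 0" using that by (cases m) auto

theorem theorem1:
  fixes f :: "'a::euclidean_space \<Rightarrow> real"
    and gradf :: "'a \<Rightarrow> 'a"
    and g :: "'a \<Rightarrow> ereal"
    and L \<rho> \<eta>lo \<eta>hi \<sigma> :: real
    and r :: nat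
    and x :: "nat \<Rightarrow> 'a"
    and \<eta> \<eta>hat :: "nat \<Rightarrow> real"
    and l :: "nat \<Rightarrow> nat"
    and z :: "nat \<Rightarrow> nat \<Rightarrow> 'a"
    and xs :: 'a
  defines "F \<equiv> (\<lambda>u. ereal (f u) + g u)"
  assumes grad: "\<And>u. (f has_derivative (\<lambda>h. gradf u \<bullet> h)) (at u)"
    and Lsmooth: "\<And>u v. norm (gradf u - gradf v) \<le> L * norm (u - v)"
    and g_proper: "proper_fun g"
    and g_lsc: "lsc_fun g"
    and g_dd: "\<And>u. u \<in> edom g \<Longrightarrow> dir_differentiable_at g u"
    and F_bdd: "\<exists>c::real. \<forall>u. F u \<ge> ereal c"
    and g_pb: "prox_bounded g"
    and \<rho>: "\<rho> > 1" and \<eta>bounds: "0 < \<eta>lo" "\<eta>lo < \<eta>hi"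
    and \<sigma>: "0 < \<sigma>" "\<sigma> < 1" and r: "r \<ge> 1"
    and x0: "x 0 \<in> edom F"
    and \<eta>hat: "\<And>t. \<eta>hat t \<in> {\<eta>lo..\<eta>hi}"
    and \<eta>_def: "\<And>t. \<eta> t = \<rho> ^ l t * \<eta>hat t"
    and trial: "\<And>t k. k \<le> l t \<Longrightarrow>
        z t k \<in> prox g (\<rho> ^ k * \<eta>hat t) (x t - (1 / (\<rho> ^ k * \<eta>hat t)) *\<^sub>R gradf (x t))"
    and reject: "\<And>t k. k < l t \<Longrightarrow>
        \<not> (F (z t k) \<le> Max ((\<lambda>j. F (x j)) ` {Suc t - r..t})
                        - ereal (\<sigma> * (\<rho> ^ k * \<eta>hat t) / 2 * norm (z t k - x t) ^ 2))"
    and accept: "\<And>t. F (z t (l t)) \<le> Max ((\<lambda>j. F (x j)) ` {Suc t - r..t})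
                        - ereal (\<sigma> * \<eta> t / 2 * norm (z t (l t) - x t) ^ 2)"
    and step: "\<And>t. x (Suc t) = z t (l t)"
    and bdd: "bounded (range x)"
    and cont: "\<exists>K. compact K \<and> range x \<subseteq> K \<and> continuous_on K F"
    and acc: "\<exists>h. strict_mono h \<and> (x \<circ> h) \<longlonglongrightarrow> xs"
  shows "d_stationary F xs"
  proof -
  have Fd: "F u = ereal (f u) + g u" for u by (simp add: F_def)
  have ninf: "g u \<noteq> -\<infinity>" for u using g_proper unfolding proper_fun_def by blast
  have L0: "L \<ge> 0"
  proof -
    obtain b :: 'a where b: "b \<in> Basis" using nonempty_Basis by blast
    have "norm (gradf b - gradf 0) \<le> L * norm (b - 0)" by (rule Lsmooth)
    then have "norm (gradf b - gradf 0) \<le> L" using b by simp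
    then show ?thesis by (smt (verit) norm_ge_zero)
  qed
  obtain cF :: real where cF: "\<And>u. F u \<ge> ereal cF" using F_bdd by blast
  have Fx0: "F (x 0) < \<infinity>" using x0 unfolding edom_def by simp
  define W where "W t = {Suc t - r..t}" for t
  have Wfin: "finite (W t)" "W t \<noteq> {}" "t \<in> W t" for t unfolding W_def using r by auto
  have Fle: "F (x t) \<le> F (x 0)" for t
  proof (induction t rule: less_induct)
    case (less t)
    show ?case
    proof (cases t)
      case 0 then show ?thesis by simp
    next
      case (Suc t')
      have "Max ((\<lambda>j. F (x j)) ` W t') \<le> F (x 0)"
        using less Suc Wfin[of t'] by (subst Max_le_iff) (auto simp: W_def)
      moreover have "F (x t) \<le> Max ((\<lambda>j. F (x j)) ` W t')"
        using accept[of t'] step[of t'] Suc ereal_minus_nonneg_le[of "\<sigma> * \<eta> t' / 2 * norm (z t' (l t') - x t') ^ 2" "Max ((\<lambda>j. F (x j)) ` W t')"]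
          \<sigma> \<eta>_def[of t'] \<eta>hat[of t'] \<eta>bounds \<rho> unfolding W_def
        by (smt (verit) order_trans mult_nonneg_nonneg zero_le_power2 zero_le_power divide_nonneg_pos atLeastAtMost_iff)
      ultimately show ?thesis by simp
    qed
  qed
  define \<psi> where "\<psi> u = real_of_ereal (F u)" for u
  define \<phi> where "\<phi> t = \<psi> (x t)" for t
  have Fx: "F (x t) = ereal (\<phi> t)" for t
    using Fle[of t] Fx0 cF[of "x t"] unfolding \<phi>_def \<psi>_def by (cases "F (x t)") auto
  have gx: "g (x t) = ereal (\<phi> t - f (x t))" for t
    using Fx[of t] ninf[of "x t"] unfolding Fd by (cases "g (x t)") auto
  have phib: "\<phi> t \<ge> cF" for t using cF[of "x t"] Fx[of t] by simp
  have monoe: "mono ereal" by (auto simp: mono_def)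
  have MaxE: "Max ((\<lambda>j. F (x j)) ` W t) = ereal (Max (\<phi> ` W t))" for t
  proof -
    have "(\<lambda>j. F (x j)) ` W t = ereal ` (\<phi> ` W t)" using Fx by (auto simp: image_image)
    then show ?thesis using mono_Max_commute[OF monoe, of "\<phi> ` W t"] Wfin[of t] by simp
  qed
  have \<eta>pos: "\<rho> ^ k * \<eta>hat t \<ge> \<eta>lo" for k t
  proof -
    have "1 \<le> \<rho> ^ k" using \<rho> by simp
    moreover have "\<eta>lo \<le> \<eta>hat t" using \<eta>hat[of t] by simp
    ultimately show ?thesis using \<eta>bounds mult_mono[of 1 "\<rho> ^ k" \<eta>lo "\<eta>hat t"] by simp
  qed
  have acc_real: "\<phi> (Suc t) \<le> Max (\<phi> ` W t) - \<sigma> * \<eta> t / 2 * (norm (x (Suc t) - x t))\<^sup>2" for t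
    using accept[of t] step[of t] Fx[of "Suc t"] MaxE[of t] unfolding W_def by simp
  have dec: "\<phi> (Suc t) \<le> Max (\<phi> ` {Suc t - r..t}) - (\<sigma> * \<eta>lo / 2) * (dist (x (Suc t)) (x t))\<^sup>2" for t
  proof -
    have "\<eta>lo \<le> \<eta> t" using \<eta>pos \<eta>_def by simp
    then have "(\<sigma> * \<eta>lo / 2) * (norm (x (Suc t) - x t))\<^sup>2 \<le> \<sigma> * \<eta> t / 2 * (norm (x (Suc t) - x t))\<^sup>2"
      using \<sigma> by (intro mult_right_mono) auto
    then show ?thesis using acc_real[of t] unfolding W_def dist_norm by linarith
  qed
  obtain K where K: "compact K" "range x \<subseteq> K" "continuous_on K F" using cont by blast
  define K' where "K' = closure (range x)"
  have K'K: "K' \<subseteq> K" unfolding K'_def using K by (simp add: closure_minimal compact_imp_closed)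
  have K'c: "compact K'" unfolding K'_def using bdd by simp
  have xK': "x t \<in> K'" for t unfolding K'_def by (simp add: closure_subset[THEN subsetD])
  have FK': "F u = ereal (\<psi> u)" if u: "u \<in> K'" for u
  proof -
    obtain ys where ys: "\<forall>n. ys n \<in> range x" "ys \<longlonglongrightarrow> u" using u unfolding K'_def closure_sequential by blast
    have "(F \<circ> ys) \<longlonglongrightarrow> F u"
      using K(3) ys K(2) K'K u unfolding continuous_on_sequentially by blast
    moreover have "\<forall>n. (F \<circ> ys) n \<le> F (x 0)"
    proof
      fix n obtain t where "ys n = x t" using ys(1) by blast
      then show "(F \<circ> ys) n \<le> F (x 0)" using Fle by simp
    qed
    ultimately have "F u \<le> F (x 0)" by (meson LIMSEQ_le_const2)
    then show ?thesis using Fx0 cF[of u] unfolding \<psi>_def by (cases "F u") auto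
  qed
  have \<psi>cont: "continuous_on K' \<psi>"
  proof (rule continuous_on_sequentiallyI)
    fix ys a assume ys: "\<forall>n. ys n \<in> K'" and a: "a \<in> K'" and lim: "ys \<longlonglongrightarrow> a"
    have "(F \<circ> ys) \<longlonglongrightarrow> F a"
      using continuous_on_subset[OF K(3) K'K] ys a lim unfolding continuous_on_sequentially by blast
    then have "(\<lambda>n. ereal (\<psi> (ys n))) \<longlonglongrightarrow> ereal (\<psi> a)" using FK' ys a by (simp add: o_def)
    then show "(\<lambda>n. \<psi> (ys n)) \<longlonglongrightarrow> \<psi> a" by (simp add: lim_ereal)
  qed
  have ucK: "uniformly_continuous_on K' \<psi>" using compact_uniformly_continuous[OF \<psi>cont K'c] .
  have uc: "\<exists>d>0. \<forall>s t. dist (x s) (x t) < d \<longrightarrow> \<bar>\<phi> s - \<phi> t\<bar> < e" if e: "e > 0" for e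
  proof -
    obtain d where d: "d > 0" "\<forall>u\<in>K'. \<forall>u'\<in>K'. dist u' u < d \<longrightarrow> dist (\<psi> u') (\<psi> u) < e"
      using ucK e unfolding uniformly_continuous_on_def by blast
    show ?thesis using d xK' unfolding \<phi>_def dist_real_def by blast
  qed
  have steps: "(\<lambda>t. dist (x (Suc t)) (x t)) \<longlonglongrightarrow> 0"
    by (rule nonmono_steps[OF r _ dec phib uc]) (use \<sigma> \<eta>bounds in simp_all)
  have gx_ne: "g (x t) \<noteq> \<infinity>" for t using gx by simp
  have gfin: "g w \<noteq> \<infinity> \<Longrightarrow> g w = ereal (real_of_ereal (g w))" for w
    using ninf[of w] by (cases "g w") auto
  have rej_bound: "\<rho> ^ k * \<eta>hat t * (1 - \<sigma>) < 2 * L" if k: "k < l t" for k t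
  proof (rule ccontr)
    assume "\<not> ?thesis"
    then have big: "2 * L \<le> \<rho> ^ k * \<eta>hat t * (1 - \<sigma>)" by simp
    define e where "e = \<rho> ^ k * \<eta>hat t"
    have epos: "e > 0" using \<eta>pos[of k t] \<eta>bounds unfolding e_def by linarith
    define zz where "zz = z t k"
    have P: "zz \<in> prox g e (x t - (1 / e) *\<^sub>R gradf (x t))"
      using trial[of k t] k unfolding zz_def e_def by simp
    from prox_ineq[OF P epos gx_ne[of t] ninf]
    have gz: "g zz \<noteq> \<infinity>" and
      ineq: "real_of_ereal (g zz) + gradf (x t) \<bullet> (zz - x t) + e/2 * (norm (zz - x t))\<^sup>2
          \<le> real_of_ereal (g (x t)) + gradf (x t) \<bullet> (x t - x t) + e/2 * (norm (x t - x t))\<^sup>2" by auto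
    have desc: "f zz \<le> f (x t) + gradf (x t) \<bullet> (zz - x t) + L * (norm (zz - x t))\<^sup>2"
      by (rule descent[OF grad Lsmooth L0])
    have "L * (norm (zz - x t))\<^sup>2 \<le> (e/2 - \<sigma> * e / 2) * (norm (zz - x t))\<^sup>2"
      using big unfolding e_def by (intro mult_right_mono) (auto simp: algebra_simps)
    then have "f zz + real_of_ereal (g zz) \<le> \<phi> t - \<sigma> * e / 2 * (norm (zz - x t))\<^sup>2"
      using ineq desc gx[of t] by (simp add: algebra_simps)
    also have "\<phi> t \<le> Max (\<phi> ` W t)" using Wfin[of t] by (intro Max_ge) auto
    finally have "f zz + real_of_ereal (g zz) \<le> Max (\<phi> ` W t) - \<sigma> * e / 2 * (norm (zz - x t))\<^sup>2" by simp
    then have "F zz \<le> Max ((\<lambda>j. F (x j)) ` W t) - ereal (\<sigma> * e / 2 * (norm (zz - x t))\<^sup>2)"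
    proof -
      have "F zz = ereal (f zz + real_of_ereal (g zz))" unfolding Fd using gfin[OF gz] by (metis plus_ereal.simps(1))
      then show ?thesis unfolding MaxE using \<open>f zz + real_of_ereal (g zz) \<le> Max (\<phi> ` W t) - \<sigma> * e / 2 * (norm (zz - x t))\<^sup>2\<close> by simp
    qed
    then show False using reject[OF k] unfolding zz_def e_def W_def by simp
  qed
  define E where "E = max \<eta>hi (\<rho> * (2 * L / (1 - \<sigma>)))"
  have \<eta>E: "\<eta> t \<le> E" for t
  proof (cases "l t")
    case 0
    then show ?thesis using \<eta>_def[of t] \<eta>hat[of t] unfolding E_def by (simp add: le_max_iff_disj)
  next
    case (Suc k)
    have "\<rho> ^ k * \<eta>hat t * (1 - \<sigma>) < 2 * L" using rej_bound[of k t] Suc by simp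
    then have "\<rho> ^ k * \<eta>hat t < 2 * L / (1 - \<sigma>)" using \<sigma> by (subst pos_less_divide_eq) auto
    then have "\<rho> * (\<rho> ^ k * \<eta>hat t) \<le> \<rho> * (2 * L / (1 - \<sigma>))" using \<rho> by (intro mult_left_mono) auto
    moreover have "\<eta> t = \<rho> * (\<rho> ^ k * \<eta>hat t)" using \<eta>_def[of t] Suc by simp
    ultimately have "\<eta> t \<le> \<rho> * (2 * L / (1 - \<sigma>))" by simp
    then show ?thesis unfolding E_def by linarith
  qed
  have Epos: "E \<ge> 0" unfolding E_def using \<eta>bounds by simp
  obtain h where h: "strict_mono h" "(x \<circ> h) \<longlonglongrightarrow> xs" using acc by blast
  have xh: "(\<lambda>k. x (h k)) \<longlonglongrightarrow> xs" using h(2) by (simp add: o_def)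
  have st0: "(\<lambda>t. x (Suc t) - x t) \<longlonglongrightarrow> 0"
    using steps unfolding dist_norm tendsto_norm_zero_iff .
  have sth: "(\<lambda>k. x (Suc (h k)) - x (h k)) \<longlonglongrightarrow> 0"
    using LIMSEQ_subseq_LIMSEQ[OF st0 h(1)] by (simp add: o_def)
  have xh1: "(\<lambda>k. x (Suc (h k))) \<longlonglongrightarrow> xs"
    using tendsto_add[OF xh sth] by simp
  have xsK': "xs \<in> K'" unfolding K'_def closure_sequential using xh by (intro exI[of _ "\<lambda>k. x (h k)"]) auto
  have fcont: "isCont f u" for u using grad[of u] by (rule has_derivative_continuous)
  have gcont: "isCont gradf u" for u
  proof -
    have "L-lipschitz_on UNIV gradf" unfolding lipschitz_on_def using L0 Lsmooth by (simp add: dist_norm)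
    then have "continuous_on UNIV gradf" by (rule lipschitz_on_continuous_on)
    then show ?thesis by (simp add: continuous_on_eq_continuous_at)
  qed
  have \<psi>h1: "(\<lambda>k. \<psi> (x (Suc (h k)))) \<longlonglongrightarrow> \<psi> xs"
    using continuous_on_sequentially[THEN iffD1, OF \<psi>cont, rule_format, of xs "\<lambda>k. x (Suc (h k))"] xsK' xh1 xK'
    by (simp add: o_def)
  have key: "\<psi> xs - f xs \<le> real_of_ereal (g u) + gradf xs \<bullet> (u - xs) + E/2 * (norm (u - xs))\<^sup>2"
    if gu: "g u \<noteq> \<infinity>" for u
  proof -
    have ineq: "\<phi> (Suc t) - f (x (Suc t)) + gradf (x t) \<bullet> (x (Suc t) - x t)
        \<le> real_of_ereal (g u) + gradf (x t) \<bullet> (u - x t) + E/2 * (norm (u - x t))\<^sup>2" for t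
    proof -
      have P: "x (Suc t) \<in> prox g (\<eta> t) (x t - (1 / \<eta> t) *\<^sub>R gradf (x t))"
        using trial[of "l t" t] step[of t] \<eta>_def[of t] by simp
      have epos: "\<eta> t > 0" using \<eta>pos[of "l t" t] \<eta>bounds \<eta>_def[of t] by linarith
      from prox_ineq[OF P epos gu ninf]
      have i1: "real_of_ereal (g (x (Suc t))) + gradf (x t) \<bullet> (x (Suc t) - x t) + \<eta> t/2 * (norm (x (Suc t) - x t))\<^sup>2
          \<le> real_of_ereal (g u) + gradf (x t) \<bullet> (u - x t) + \<eta> t/2 * (norm (u - x t))\<^sup>2" by auto
      have "\<eta> t/2 * (norm (u - x t))\<^sup>2 \<le> E/2 * (norm (u - x t))\<^sup>2"
        using \<eta>E[of t] by (intro mult_right_mono) auto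
      moreover have "0 \<le> \<eta> t/2 * (norm (x (Suc t) - x t))\<^sup>2" using epos by simp
      ultimately show ?thesis using i1 gx[of "Suc t"] by simp
    qed
    have lim1: "(\<lambda>k. \<phi> (Suc (h k)) - f (x (Suc (h k))) + gradf (x (h k)) \<bullet> (x (Suc (h k)) - x (h k)))
        \<longlonglongrightarrow> \<psi> xs - f xs + gradf xs \<bullet> 0"
      unfolding \<phi>_def
      by (intro tendsto_intros \<psi>h1 isCont_tendsto_compose[OF fcont xh1] isCont_tendsto_compose[OF gcont xh] sth)
    have lim2: "(\<lambda>k. real_of_ereal (g u) + gradf (x (h k)) \<bullet> (u - x (h k)) + E/2 * (norm (u - x (h k)))\<^sup>2)
        \<longlonglongrightarrow> real_of_ereal (g u) + gradf xs \<bullet> (u - xs) + E/2 * (norm (u - xs))\<^sup>2"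
      by (intro tendsto_intros isCont_tendsto_compose[OF gcont xh] xh)
    have "\<psi> xs - f xs + gradf xs \<bullet> 0 \<le> real_of_ereal (g u) + gradf xs \<bullet> (u - xs) + E/2 * (norm (u - xs))\<^sup>2"
      using LIMSEQ_le[OF lim1 lim2] ineq by blast
    then show ?thesis by simp
  qed
  have Fxs: "F xs = ereal (\<psi> xs)" using FK' xsK' by blast
  have gxs: "g xs = ereal (\<psi> xs - f xs)" using Fxs ninf[of xs] unfolding Fd by (cases "g xs") auto
  have xsdom: "xs \<in> edom g" unfolding edom_def using gxs by simp
  have gdd: "dir_differentiable_at g xs" using g_dd xsdom by blast
  have main: "\<exists>D. has_dir_deriv F xs d D \<and> D \<ge> 0" for d
  proof -
    obtain Dg where Dg: "has_dir_deriv g xs d Dg" using gdd unfolding dir_differentiable_at_def by blast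
    define q where "q \<tau> = (F (xs + \<tau> *\<^sub>R d) - F xs) / ereal \<tau>" for \<tau>
    have der0: "((\<lambda>s. f (xs + s *\<^sub>R d)) has_real_derivative (gradf xs \<bullet> d)) (at 0)"
    proof -
      have l: "((\<lambda>s. xs + s *\<^sub>R d) has_derivative (\<lambda>h. h *\<^sub>R d)) (at 0)"
        by (auto intro!: derivative_eq_intros)
      have "((\<lambda>s. f (xs + s *\<^sub>R d)) has_derivative (\<lambda>h. gradf (xs + 0 *\<^sub>R d) \<bullet> (h *\<^sub>R d))) (at 0)"
        using has_derivative_compose[OF l grad] by (simp add: o_def)
      moreover have "(\<lambda>h. gradf (xs + 0 *\<^sub>R d) \<bullet> (h *\<^sub>R d)) = (*) (gradf xs \<bullet> d)"
        by (auto simp: mult.commute)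
      ultimately show ?thesis unfolding has_field_derivative_def by simp
    qed
    have "((\<lambda>s. f (xs + s *\<^sub>R d)) has_real_derivative (gradf xs \<bullet> d)) (at 0 within {0<..})"
      using der0 by (rule has_field_derivative_at_within)
    then have fq: "((\<lambda>\<tau>. (f (xs + \<tau> *\<^sub>R d) - f xs) / \<tau>) \<longlongrightarrow> gradf xs \<bullet> d) (at_right 0)"
      unfolding has_field_derivative_iff by simp
    have qsplit: "\<forall>\<^sub>F \<tau> in at_right 0. q \<tau> = ereal ((f (xs + \<tau> *\<^sub>R d) - f xs)/\<tau>) + (g (xs + \<tau> *\<^sub>R d) - g xs)/ereal \<tau>"
      using eventually_at_right_less
    proof (rule eventually_mono)
      fix \<tau> :: real assume "0 < \<tau>"
      then show "q \<tau> = ereal ((f (xs + \<tau> *\<^sub>R d) - f xs)/\<tau>) + (g (xs + \<tau> *\<^sub>R d) - g xs)/ereal \<tau>"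
        unfolding q_def Fd using quot_split[OF _ gxs ninf] by blast
    qed
    have "((\<lambda>\<tau>. ereal ((f (xs + \<tau> *\<^sub>R d) - f xs)/\<tau>) + (g (xs + \<tau> *\<^sub>R d) - g xs)/ereal \<tau>)
        \<longlongrightarrow> ereal (gradf xs \<bullet> d) + Dg) (at_right 0)"
      by (rule tendsto_add_ereal_general2) (use fq Dg in \<open>simp_all add: lim_ereal has_dir_deriv_def\<close>)
    then have lim: "(q \<longlongrightarrow> ereal (gradf xs \<bullet> d) + Dg) (at_right 0)"
      using qsplit by (simp add: tendsto_cong)
    define lw where "lw \<tau> = (f (xs + \<tau> *\<^sub>R d) - f xs)/\<tau> - gradf xs \<bullet> d - E/2 * \<tau> * (norm d)\<^sup>2" for \<tau>
    have "(lw \<longlongrightarrow> gradf xs \<bullet> d - gradf xs \<bullet> d - E/2 * 0 * (norm d)\<^sup>2) (at_right 0)"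
      unfolding lw_def by (intro tendsto_intros fq)
    then have "((\<lambda>\<tau>. ereal (lw \<tau>)) \<longlongrightarrow> ereal 0) (at_right 0)" by (simp add: lim_ereal)
    moreover have "\<forall>\<^sub>F \<tau> in at_right 0. ereal (lw \<tau>) \<le> q \<tau>"
      using eventually_conj[OF eventually_at_right_less qsplit]
    proof (rule eventually_mono)
      fix \<tau> :: real
      assume a: "0 < \<tau> \<and> q \<tau> = ereal ((f (xs + \<tau> *\<^sub>R d) - f xs)/\<tau>) + (g (xs + \<tau> *\<^sub>R d) - g xs)/ereal \<tau>"
      then have tp: "\<tau> > 0" by simp
      show "ereal (lw \<tau>) \<le> q \<tau>"
      proof (cases "g (xs + \<tau> *\<^sub>R d) = \<infinity>")
        case True
        then show ?thesis using a gxs by simp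
      next
        case False
        define G where "G = real_of_ereal (g (xs + \<tau> *\<^sub>R d))"
        have gG: "g (xs + \<tau> *\<^sub>R d) = ereal G" unfolding G_def using gfin[OF False] .
        have k: "\<psi> xs - f xs \<le> G + gradf xs \<bullet> (\<tau> *\<^sub>R d) + E/2 * (norm (\<tau> *\<^sub>R d))\<^sup>2"
          using key[OF False] unfolding G_def by simp
        have "\<tau> * (- (gradf xs \<bullet> d) - E/2 * \<tau> * (norm d)\<^sup>2) \<le> G - (\<psi> xs - f xs)"
          using k tp by (simp add: algebra_simps power2_eq_square)
        then have "- (gradf xs \<bullet> d) - E/2 * \<tau> * (norm d)\<^sup>2 \<le> (G - (\<psi> xs - f xs)) / \<tau>"
          using tp by (simp add: le_divide_eq mult.commute)
        then have "lw \<tau> \<le> (f (xs + \<tau> *\<^sub>R d) - f xs)/\<tau> + (G - (\<psi> xs - f xs)) / \<tau>"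
          unfolding lw_def by linarith
        then show ?thesis using a gG gxs tp by simp
      qed
    qed
    ultimately have "ereal 0 \<le> ereal (gradf xs \<bullet> d) + Dg"
      by (intro tendsto_le[OF trivial_limit_at_right_real lim]) auto
    then show ?thesis using lim unfolding has_dir_deriv_def q_def zero_ereal_def by blast
  qed
  show ?thesis unfolding d_stationary_def dir_differentiable_at_def
  proof (intro conjI allI)
    show "\<bar>F xs\<bar> < \<infinity>" using Fxs by simp
    fix d
    show "\<exists>D. has_dir_deriv F xs d D" using main by blast
    obtain D where D: "has_dir_deriv F xs d D" "D \<ge> 0" using main by blast
    have "dir_deriv F xs d = D"
      unfolding dir_deriv_def using D(1) unfolding has_dir_deriv_def
      by (intro tendsto_Lim) (simp_all add: trivial_limit_at_right_real)
    then show "dir_deriv F xs d \<ge> 0" using D by simp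
  qed
qed


end
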